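(* Let $G$ be a pro-$p$ group such that all quotients $\gamma_i(G)/\gamma_{i+1}(G)$ of its lower central series are torsion-free, and let $\varphi$ be an automorphism of $G$ of finite order that acts trivially on the abelianization $G/[G,G]$. Then $\varphi$ is the identity.
   Context: For a pro-$p$ group $G$, $\gamma_1(G)=G$ and $\gamma_{i+1}(G)=\overline{[\gamma_i(G),G]}$ (closed subgroups) denote the terms of the lower central series; $[G,G]$ denotes the closed commutator subgroup. *)

theory Defs
  imports "HOL-Analysis.Analysis" "HOL-Algebra.Algebra"
begin

definition topological_group :: "('a, 'b) monoid_scheme \<Rightarrow> 'a topology \<Rightarrow> bool" where
  "topological_group G T \<longleftrightarrow> group G \<and> topspace T = carrier G \<and>
     continuous_map (prod_topology T T) T (\<lambda>(x, y). mult G x y) \<and>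
     continuous_map T T (\<lambda>x. m_inv G x)"

definition totally_disconnected_space :: "'a topology \<Rightarrow> bool" where
  "totally_disconnected_space T \<longleftrightarrow> (\<forall>x y. connected_component_of T x y \<longrightarrow> x = y)"

definition profinite_group :: "('a, 'b) monoid_scheme \<Rightarrow> 'a topology \<Rightarrow> bool" where
  "profinite_group G T \<longleftrightarrow> topological_group G T \<and> compact_space T \<and> Hausdorff_space T \<and>
     totally_disconnected_space T"

text \<open>Pro-p group: profinite group in which every open normal subgroup has p-power index
  (equivalently, an inverse limit of finite p-groups).\<close>
definition pro_p_group :: "nat \<Rightarrow> ('a, 'b) monoid_scheme \<Rightarrow> 'a topology \<Rightarrow> bool" where
  "pro_p_group p G T \<longleftrightarrow> Factorial_Ring.prime p \<and> profinite_group G T \<and>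
     (\<forall>N. N \<lhd> G \<and> openin T N \<longrightarrow> (\<exists>k. card (RCOSETS G N) = p ^ k))"

definition commutator :: "('a, 'b) monoid_scheme \<Rightarrow> 'a \<Rightarrow> 'a \<Rightarrow> 'a" where
  "commutator G x y = mult G (mult G (mult G (m_inv G x) (m_inv G y)) x) y"

definition closed_commutator :: "('a, 'b) monoid_scheme \<Rightarrow> 'a topology \<Rightarrow> 'a set \<Rightarrow> 'a set \<Rightarrow> 'a set" where
  "closed_commutator G T A B =
     T closure_of (generate G {commutator G a b | a b. a \<in> A \<and> b \<in> B})"

text \<open>Lower central series: gamma 1 = G, gamma (i+1) = closure of [gamma i, G].
  (gamma 0 is set to G as well, a harmless convention.)\<close>
fun lower_central :: "('a, 'b) monoid_scheme \<Rightarrow> 'a topology \<Rightarrow> nat \<Rightarrow> 'a set" where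
  "lower_central G T 0 = carrier G"
| "lower_central G T (Suc 0) = carrier G"
| "lower_central G T (Suc (Suc i)) =
     closed_commutator G T (lower_central G T (Suc i)) (carrier G)"

definition torsion_free_group :: "('a, 'b) monoid_scheme \<Rightarrow> bool" where
  "torsion_free_group H \<longleftrightarrow>
     (\<forall>x \<in> carrier H. \<forall>n::nat. n > 0 \<and> pow H x n = one H \<longrightarrow> x = one H)"

end

theory Submission
  imports Defs
begin


locale tg = group G for G (structure) + fixes T :: "'a topology"
  assumes tg: "topological_group G T"
begin

lemma top[simp]: "topspace T = carrier G"
  using tg by (simp add: topological_group_def)

lemma cont_mult: "continuous_map (prod_topology T T) T (\<lambda>(x, y). x \<otimes> y)"
  using tg by (simp add: topological_group_def)

lemma cont_inv: "continuous_map T T (\<lambda>x. inv x)"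
  using tg by (simp add: topological_group_def)

lemma cont_mult2:
  assumes "continuous_map T T f" "continuous_map T T g"
  shows "continuous_map T T (\<lambda>x. f x \<otimes> g x)"
proof -
  have "continuous_map T (prod_topology T T) (\<lambda>x. (f x, g x))"
    using assms by (simp add: continuous_map_paired)
  from continuous_map_compose[OF this cont_mult] show ?thesis by (simp add: o_def)
qed

lemma cont_const: "c \<in> carrier G \<Longrightarrow> continuous_map T T (\<lambda>x. c)"
  by simp

lemma cont_id: "continuous_map T T (\<lambda>x. x)"
  using continuous_map_id[of T] by (simp add: id_def)

lemma cont_inv2: "continuous_map T T f \<Longrightarrow> continuous_map T T (\<lambda>x. inv (f x))"
  using continuous_map_compose[OF _ cont_inv] by (simp add: o_def)

lemma cont_lmul: "c \<in> carrier G \<Longrightarrow> continuous_map T T (\<lambda>x. c \<otimes> x)"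
  by (intro cont_mult2 cont_const cont_id)

lemma cont_rmul: "c \<in> carrier G \<Longrightarrow> continuous_map T T (\<lambda>x. x \<otimes> c)"
  by (intro cont_mult2 cont_const cont_id)

lemma cont_conj: "c \<in> carrier G \<Longrightarrow> continuous_map T T (\<lambda>x. c \<otimes> x \<otimes> inv c)"
  by (intro cont_mult2 cont_const cont_id) auto

lemma open_lcoset:
  assumes "openin T U" "c \<in> carrier G"
  shows "openin T (c <# U)"
proof -
  have "openin T {x \<in> topspace T. inv c \<otimes> x \<in> U}"
    by (rule openin_continuous_map_preimage[OF cont_lmul assms(1)]) (use assms in simp)
  moreover have "{x \<in> topspace T. inv c \<otimes> x \<in> U} = c <# U"
  proof -
    have U: "U \<subseteq> carrier G" using openin_subset[OF assms(1)] by simp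
    show ?thesis
    proof (intro equalityI subsetI)
      fix x assume "x \<in> {x \<in> topspace T. inv c \<otimes> x \<in> U}"
      then have x: "x \<in> carrier G" "inv c \<otimes> x \<in> U" by auto
      have "x = c \<otimes> (inv c \<otimes> x)" using x assms(2) by (simp add: m_assoc[symmetric])
      then show "x \<in> c <# U" using x(2) unfolding l_coset_def by blast
    next
      fix x assume "x \<in> c <# U"
      then obtain u where u: "u \<in> U" "x = c \<otimes> u" unfolding l_coset_def by blast
      then have "u \<in> carrier G" using U by blast
      then show "x \<in> {x \<in> topspace T. inv c \<otimes> x \<in> U}" using u assms(2) by (simp add: m_assoc[symmetric])
    qed
  qed
  ultimately show ?thesis by simp
qed

lemma closure_sub_open_subgroup:
  assumes H: "subgroup H G" "openin T H" and F: "subgroup F G" "H \<subseteq> F" and S: "S \<subseteq> F"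
  shows "T closure_of S \<subseteq> F"
proof
  fix x assume x: "x \<in> T closure_of S"
  then have xG: "x \<in> carrier G" using closure_of_subset_topspace by fastforce
  have "x \<in> x <# H" using H xG
    by (metis coset_join3 r_one subgroup.one_closed l_coset_def UN_I singletonI subgroup.mem_carrier one_closed)
  then obtain y where y: "y \<in> S" "y \<in> x <# H"
    using x open_lcoset[OF H(2) xG] by (auto simp: in_closure_of)
  then obtain h where h: "h \<in> H" "y = x \<otimes> h" by (auto simp: l_coset_def)
  have hG: "h \<in> carrier G" using subgroup.mem_carrier[OF H(1) h(1)] .
  have "x = y \<otimes> inv h" using h(2) xG hG by (simp add: m_assoc)
  moreover have "y \<in> F" using y(1) S by blast
  moreover have "inv h \<in> F" using subgroup.m_inv_closed[OF F(1)] h(1) F(2) by blast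
  ultimately show "x \<in> F" using subgroup.m_closed[OF F(1)] by metis
qed

lemma closure_subgroup:
  assumes "subgroup H G"
  shows "subgroup (T closure_of H) G"
proof -
  have Hs: "H \<subseteq> topspace T" using assms subgroup.subset by auto
  let ?C = "T closure_of H"
  have C: "?C \<subseteq> carrier G" using closure_of_subset_topspace by fastforce
  have m: "x \<otimes> y \<in> ?C" if "x \<in> ?C" "y \<in> ?C" for x y
  proof -
    have "(x, y) \<in> prod_topology T T closure_of (H \<times> H)"
      using that by (simp add: closure_of_Times)
    then have "(\<lambda>(x, y). x \<otimes> y) (x, y) \<in> T closure_of ((\<lambda>(x, y). x \<otimes> y) ` (H \<times> H))"
      using continuous_map_image_closure_subset[OF cont_mult] by blast
    moreover have "(\<lambda>(x, y). x \<otimes> y) ` (H \<times> H) \<subseteq> H"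
      using assms subgroup.m_closed by fastforce
    ultimately show ?thesis using closure_of_mono by fastforce
  qed
  have i: "inv x \<in> ?C" if "x \<in> ?C" for x
  proof -
    have "inv x \<in> T closure_of ((\<lambda>x. inv x) ` H)"
      using continuous_map_image_closure_subset[OF cont_inv] that by blast
    moreover have "(\<lambda>x. inv x) ` H \<subseteq> H"
      using assms subgroup.m_inv_closed by fastforce
    ultimately show ?thesis using closure_of_mono by fastforce
  qed
  have "\<one> \<in> ?C" using closure_of_subset[OF Hs] assms subgroup.one_closed by blast
  then show ?thesis using C m i by (auto intro!: subgroupI)
qed

lemma closure_normal:
  assumes "H \<lhd> G"
  shows "(T closure_of H) \<lhd> G"
proof -
  have sH: "subgroup H G" using assms normal_imp_subgroup by blast
  show ?thesis unfolding normal_inv_iff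
  proof (intro conjI ballI)
    show "subgroup (T closure_of H) G" using closure_subgroup[OF sH] .
    fix g h assume g: "g \<in> carrier G" and h: "h \<in> T closure_of H"
    have "g \<otimes> h \<otimes> inv g \<in> T closure_of ((\<lambda>x. g \<otimes> x \<otimes> inv g) ` H)"
      using continuous_map_image_closure_subset[OF cont_conj[OF g]] h by blast
    moreover have "(\<lambda>x. g \<otimes> x \<otimes> inv g) ` H \<subseteq> H"
      using assms g by (auto simp: normal_inv_iff)
    ultimately show "g \<otimes> h \<otimes> inv g \<in> T closure_of H" using closure_of_mono by fastforce
  qed
qed

end



context group begin

lemma gx1[simp]: "x \<in> carrier G \<Longrightarrow> y \<in> carrier G \<Longrightarrow> x \<otimes> (inv x \<otimes> y) = y"
  by (simp add: m_assoc[symmetric])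
lemma gx2[simp]: "x \<in> carrier G \<Longrightarrow> y \<in> carrier G \<Longrightarrow> inv x \<otimes> (x \<otimes> y) = y"
  by (simp add: m_assoc[symmetric])

lemma comm_carrier[simp]: "a \<in> carrier G \<Longrightarrow> b \<in> carrier G \<Longrightarrow> commutator G a b \<in> carrier G"
  by (simp add: commutator_def)

lemma comm_conj:
  assumes "a \<in> carrier G" "b \<in> carrier G" "g \<in> carrier G"
  shows "g \<otimes> commutator G a b \<otimes> inv g = commutator G (g \<otimes> a \<otimes> inv g) (g \<otimes> b \<otimes> inv g)"
  using assms by (simp add: commutator_def m_assoc inv_mult_group)

lemma comm_one_imp_commute:
  assumes "a \<in> carrier G" "b \<in> carrier G" "commutator G a b = \<one>"
  shows "a \<otimes> b = b \<otimes> a"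
proof -
  have "b \<otimes> a \<otimes> (inv a \<otimes> inv b \<otimes> a \<otimes> b) = a \<otimes> b"
    using assms by (simp add: m_assoc)
  then show ?thesis using assms by (simp add: commutator_def)
qed

lemma commute_imp_comm_one:
  assumes "a \<in> carrier G" "b \<in> carrier G" "a \<otimes> b = b \<otimes> a"
  shows "commutator G a b = \<one>"
proof -
  have "commutator G a b = inv a \<otimes> inv b \<otimes> (b \<otimes> a)"
    using assms by (simp add: commutator_def m_assoc)
  also have "\<dots> = \<one>" using assms by (simp add: m_assoc)
  finally show ?thesis .
qed

lemma normal_carrier: "carrier G \<lhd> G"
  by (simp add: normal_inv_iff subgroup_self)

lemma comm_in_normal:
  assumes "K \<lhd> G" "a \<in> K" "b \<in> carrier G"
  shows "commutator G a b \<in> K"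
proof -
  interpret K: normal K G by fact
  have aG: "a \<in> carrier G" using assms K.subset by blast
  have "inv b \<otimes> a \<otimes> b \<in> K" using K.inv_op_closed1 assms by blast
  then have "inv a \<otimes> (inv b \<otimes> a \<otimes> b) \<in> K" using assms(2) by (simp add: K.m_closed K.m_inv_closed)
  then show ?thesis using aG assms(3) by (simp add: commutator_def m_assoc)
qed

end

context tg begin

abbreviation "LC \<equiv> lower_central G T"

lemma LC_SS: "LC (Suc (Suc i)) = T closure_of generate G {commutator G a b | a b. a \<in> LC (Suc i) \<and> b \<in> carrier G}"
  by (simp add: closed_commutator_def)

lemma comm_set_conj_closed:
  assumes "K \<lhd> G"
  shows "\<And>h g. h \<in> {commutator G a b | a b. a \<in> K \<and> b \<in> carrier G} \<Longrightarrow> g \<in> carrier G \<Longrightarrow>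
     g \<otimes> h \<otimes> inv g \<in> {commutator G a b | a b. a \<in> K \<and> b \<in> carrier G}"
proof -
  fix h g assume h: "h \<in> {commutator G a b | a b. a \<in> K \<and> b \<in> carrier G}" and g: "g \<in> carrier G"
  then obtain a b where ab: "h = commutator G a b" "a \<in> K" "b \<in> carrier G" by blast
  interpret K: normal K G by fact
  have aG: "a \<in> carrier G" using ab K.subset by blast
  have "g \<otimes> h \<otimes> inv g = commutator G (g \<otimes> a \<otimes> inv g) (g \<otimes> b \<otimes> inv g)"
    using comm_conj[OF aG ab(3) g] ab by simp
  moreover have "g \<otimes> a \<otimes> inv g \<in> K" using K.inv_op_closed2 g ab by blast
  moreover have "g \<otimes> b \<otimes> inv g \<in> carrier G" using g ab by simp
  ultimately show "g \<otimes> h \<otimes> inv g \<in> {commutator G a b | a b. a \<in> K \<and> b \<in> carrier G}" by blast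
qed

lemma comm_set_sub:
  assumes "K \<subseteq> carrier G"
  shows "{commutator G a b | a b. a \<in> K \<and> b \<in> carrier G} \<subseteq> carrier G"
  using assms by auto

lemma closed_carrier[simp]: "closedin T (carrier G)"
  using closedin_topspace[of T] by simp

lemma LC_normal_closed: "LC k \<lhd> G \<and> closedin T (LC k)"
proof (induction k)
  case 0 then show ?case by (simp add: normal_carrier)
next
  case (Suc k)
  show ?case
  proof (cases k)
    case 0 then show ?thesis by (simp add: normal_carrier)
  next
    case (Suc i)
    have n: "LC (Suc i) \<lhd> G" using Suc.IH Suc by simp
    have sub: "LC (Suc i) \<subseteq> carrier G" using n normal_imp_subgroup subgroup.subset by blast
    have "generate G {commutator G a b | a b. a \<in> LC (Suc i) \<and> b \<in> carrier G} \<lhd> G"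
      by (rule normal_generateI[OF comm_set_sub[OF sub] comm_set_conj_closed[OF n]])
    then have "LC (Suc (Suc i)) \<lhd> G" unfolding LC_SS by (rule closure_normal)
    moreover have "closedin T (LC (Suc (Suc i)))" unfolding LC_SS by simp
    ultimately show ?thesis using Suc by simp
  qed
qed

lemma LC_normal: "LC k \<lhd> G" using LC_normal_closed by blast
lemma LC_closed: "closedin T (LC k)" using LC_normal_closed by blast
lemma LC_subgroup: "subgroup (LC k) G" using LC_normal by (rule normal_imp_subgroup)
lemma LC_carrier: "LC k \<subseteq> carrier G"
  using LC_subgroup by (rule subgroup.subset)

lemma LC_comm: "a \<in> LC (Suc i) \<Longrightarrow> b \<in> carrier G \<Longrightarrow> commutator G a b \<in> LC (Suc (Suc i))"
proof -
  assume a: "a \<in> LC (Suc i)" and b: "b \<in> carrier G"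
  let ?S = "{commutator G a b | a b. a \<in> LC (Suc i) \<and> b \<in> carrier G}"
  have 1: "commutator G a b \<in> generate G ?S" using a b by (blast intro: generate.incl)
  have "generate G ?S \<subseteq> carrier G"
    by (rule generate_incl[OF comm_set_sub[OF LC_carrier]])
  then have "generate G ?S \<subseteq> T closure_of generate G ?S" by (intro closure_of_subset) simp
  then show ?thesis unfolding LC_SS using 1 by blast
qed

lemma LC_mono_Suc: "LC (Suc k) \<subseteq> LC k"
proof (cases k)
  case 0 then show ?thesis by simp
next
  case (Suc i)
  let ?S = "{commutator G a b | a b. a \<in> LC (Suc i) \<and> b \<in> carrier G}"
  have "?S \<subseteq> LC (Suc i)" using comm_in_normal[OF LC_normal] by blast
  then have "generate G ?S \<subseteq> LC (Suc i)"
    by (rule generate_subgroup_incl[OF _ LC_subgroup])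
  then have "T closure_of generate G ?S \<subseteq> LC (Suc i)"
    by (rule closure_of_minimal[OF _ LC_closed])
  then show ?thesis using Suc LC_SS by simp
qed

lemma LC_mono: "i \<le> j \<Longrightarrow> LC j \<subseteq> LC i"
proof (induction j)
  case 0 then show ?case by simp
next
  case (Suc j)
  show ?case
  proof (cases "i \<le> j")
    case True then show ?thesis using Suc.IH LC_mono_Suc[of j] by blast
  next
    case False then have "i = Suc j" using Suc.prems by simp
    then show ?thesis by simp
  qed
qed


lemma main_step:
  fixes \<phi> :: "'a \<Rightarrow> 'a" and n :: nat and K N C :: "'a set"
  assumes K: "K \<lhd> G" and N: "N \<lhd> G" "closedin T N" "N \<subseteq> K"
    and KN: "\<And>u g. u \<in> K \<Longrightarrow> g \<in> carrier G \<Longrightarrow> commutator G u g \<in> N"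
    and phi: "\<phi> \<in> hom G G" "continuous_map T T \<phi>"
    and fin: "\<forall>x \<in> carrier G. (\<phi> ^^ n) x = x"
    and Cdef: "C = T closure_of generate G {commutator G a b | a b. a \<in> carrier G \<and> b \<in> carrier G}"
    and C2: "\<And>x. x \<in> carrier G \<Longrightarrow> inv x \<otimes> \<phi> x \<in> C"
    and IH: "\<And>x. x \<in> carrier G \<Longrightarrow> inv x \<otimes> \<phi> x \<in> K"
    and tf: "\<And>y. y \<in> K \<Longrightarrow> y [^] n \<in> N \<Longrightarrow> y \<in> N"
  shows "x \<in> carrier G \<Longrightarrow> inv x \<otimes> \<phi> x \<in> N"
proof -
  interpret N: normal N G by fact
  interpret P: group_hom G G \<phi> using phi(1) by (simp add: group_hom_def group_hom_axioms_def is_group)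
  define Q where "Q = G Mod N"
  define \<pi> where "\<pi> = (\<lambda>a. N #> a)"
  define \<delta> where "\<delta> = (\<lambda>x. inv x \<otimes> \<phi> x)"
  have Qg: "group Q" unfolding Q_def by (rule N.factorgroup_is_group)
  interpret Q: group Q by (rule Qg)
  have pih: "\<pi> \<in> hom G Q" unfolding \<pi>_def Q_def by (rule N.r_coset_hom_Mod)
  interpret PI: group_hom G Q \<pi> using pih by (simp add: group_hom_def group_hom_axioms_def is_group Qg)
  have phiG[simp]: "\<phi> x \<in> carrier G" if "x \<in> carrier G" for x using that by simp
  have dG[simp]: "\<delta> x \<in> carrier G" if "x \<in> carrier G" for x using that by (simp add: \<delta>_def)
  have KG: "K \<subseteq> carrier G" using K normal_imp_subgroup subgroup.subset by blast
  have Q1: "\<one>\<^bsub>Q\<^esub> = N" by (simp add: Q_def FactGroup_def)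
  have ker: "\<pi> z = \<one>\<^bsub>Q\<^esub> \<longleftrightarrow> z \<in> N" if "z \<in> carrier G" for z
  proof
    assume "\<pi> z = \<one>\<^bsub>Q\<^esub>"
    then have "N #> z = N" by (simp add: \<pi>_def Q1)
    moreover have "z \<in> N #> z" using rcos_self[OF that N.subgroup_axioms] .
    ultimately show "z \<in> N" by simp
  next
    assume "z \<in> N" then show "\<pi> z = \<one>\<^bsub>Q\<^esub>"
      unfolding \<pi>_def Q1 by (rule N.rcos_const[OF is_group])
  qed
  have central: "\<pi> u \<otimes>\<^bsub>Q\<^esub> \<pi> g = \<pi> g \<otimes>\<^bsub>Q\<^esub> \<pi> u" if "u \<in> K" "g \<in> carrier G" for u g
  proof -
    have uG: "u \<in> carrier G" using that KG by blast
    have "\<pi> (commutator G u g) = \<one>\<^bsub>Q\<^esub>" using ker KN[OF that] uG that(2) by simp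
    then have "commutator Q (\<pi> u) (\<pi> g) = \<one>\<^bsub>Q\<^esub>"
      using uG that(2) by (simp add: commutator_def)
    then show ?thesis using Q.comm_one_imp_commute uG that(2) by simp
  qed
  define D where "D = (\<lambda>x. \<pi> (\<delta> x))"
  have dmult: "\<delta> (x \<otimes> y) = inv y \<otimes> \<delta> x \<otimes> y \<otimes> \<delta> y" if "x \<in> carrier G" "y \<in> carrier G" for x y
    using that by (simp add: \<delta>_def m_assoc inv_mult_group)
  have Dhom: "D \<in> hom G Q"
  proof (rule homI)
    fix x assume "x \<in> carrier G" then show "D x \<in> carrier Q" by (simp add: D_def)
  next
    fix x y assume x: "x \<in> carrier G" and y: "y \<in> carrier G"
    have "D (x \<otimes> y) = inv\<^bsub>Q\<^esub> (\<pi> y) \<otimes>\<^bsub>Q\<^esub> (D x \<otimes>\<^bsub>Q\<^esub> \<pi> y) \<otimes>\<^bsub>Q\<^esub> D y"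
      using x y by (simp add: D_def dmult Q.m_assoc)
    also have "D x \<otimes>\<^bsub>Q\<^esub> \<pi> y = \<pi> y \<otimes>\<^bsub>Q\<^esub> D x"
      unfolding D_def using central[OF IH[OF x] y] by (simp add: \<delta>_def)
    also have "inv\<^bsub>Q\<^esub> (\<pi> y) \<otimes>\<^bsub>Q\<^esub> (\<pi> y \<otimes>\<^bsub>Q\<^esub> D x) = D x"
      using x y by (simp add: D_def)
    finally show "D (x \<otimes> y) = D x \<otimes>\<^bsub>Q\<^esub> D y" .
  qed
  interpret DH: group_hom G Q D using Dhom by (simp add: group_hom_def group_hom_axioms_def is_group Qg)
  have kerD: "D z = \<one>\<^bsub>Q\<^esub> \<longleftrightarrow> \<delta> z \<in> N" if "z \<in> carrier G" for z
    using ker that by (simp add: D_def)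
  have Dcomm: "D (commutator G a b) = \<one>\<^bsub>Q\<^esub>" if "a \<in> carrier G" "b \<in> carrier G" for a b
  proof -
    have "D a \<otimes>\<^bsub>Q\<^esub> D b = D b \<otimes>\<^bsub>Q\<^esub> D a"
      using central[OF IH[OF that(1)] dG[OF that(2)]] by (simp add: D_def \<delta>_def)
    then have "commutator Q (D a) (D b) = \<one>\<^bsub>Q\<^esub>"
      using that by (intro Q.commute_imp_comm_one) auto
    then show ?thesis using that by (simp add: commutator_def)
  qed
  let ?S = "{commutator G a b | a b. a \<in> carrier G \<and> b \<in> carrier G}"
  have "?S \<subseteq> kernel G Q D" using Dcomm by (auto simp: kernel_def)
  then have gen: "generate G ?S \<subseteq> kernel G Q D"
    by (rule generate_subgroup_incl[OF _ DH.subgroup_kernel])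
  have dcont: "continuous_map T T \<delta>"
    unfolding \<delta>_def by (intro cont_mult2 cont_inv2 cont_id phi(2))
  have clo: "closedin T {x \<in> topspace T. \<delta> x \<in> N}"
    by (rule closedin_continuous_map_preimage[OF dcont N(2)])
  have "generate G ?S \<subseteq> {x \<in> topspace T. \<delta> x \<in> N}"
    using gen kerD by (auto simp: kernel_def)
  then have "C \<subseteq> {x \<in> topspace T. \<delta> x \<in> N}"
    unfolding Cdef by (rule closure_of_minimal[OF _ clo])
  then have DC: "D y = \<one>\<^bsub>Q\<^esub>" if "y \<in> C" for y using that kerD by auto
  have dphi: "\<delta> (\<phi> x) = \<delta> x \<otimes> \<delta> (\<delta> x)" if "x \<in> carrier G" for x
    using that by (simp add: \<delta>_def m_assoc P.hom_inv)
  have Dphi: "D (\<phi> x) = D x" if "x \<in> carrier G" for x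
  proof -
    have "D (\<phi> x) = D x \<otimes>\<^bsub>Q\<^esub> D (\<delta> x)"
      using that by (simp add: D_def dphi)
    also have "D (\<delta> x) = \<one>\<^bsub>Q\<^esub>" using DC C2 that by (simp add: \<delta>_def)
    finally show ?thesis using that by (simp add: D_def)
  qed
  have powG: "(\<phi> ^^ j) x \<in> carrier G" if "x \<in> carrier G" for j x
    using that by (induction j) auto
  have Dj: "D ((\<phi> ^^ j) x) = D x" if "x \<in> carrier G" for j x
    using that by (induction j) (auto simp: Dphi powG)
  have pij: "\<pi> ((\<phi> ^^ j) x) = \<pi> x \<otimes>\<^bsub>Q\<^esub> (D x [^]\<^bsub>Q\<^esub> j)" if x: "x \<in> carrier G" for j x
  proof (induction j)
    case 0 then show ?case using x by simp
  next
    case (Suc j)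
    let ?y = "(\<phi> ^^ j) x"
    have yG: "?y \<in> carrier G" using powG x .
    have "(\<phi> ^^ Suc j) x = ?y \<otimes> \<delta> ?y" using yG by (simp add: \<delta>_def)
    then have "\<pi> ((\<phi> ^^ Suc j) x) = \<pi> ?y \<otimes>\<^bsub>Q\<^esub> D ?y" using yG by (simp add: D_def)
    also have "\<dots> = \<pi> x \<otimes>\<^bsub>Q\<^esub> (D x [^]\<^bsub>Q\<^esub> j) \<otimes>\<^bsub>Q\<^esub> D x" using Suc.IH Dj[OF x] by simp
    also have "\<dots> = \<pi> x \<otimes>\<^bsub>Q\<^esub> (D x [^]\<^bsub>Q\<^esub> Suc j)"
      using x by (simp add: Q.m_assoc Q.nat_pow_Suc D_def)
    finally show ?case .
  qed
  assume x: "x \<in> carrier G"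
  have "\<pi> x = \<pi> x \<otimes>\<^bsub>Q\<^esub> (D x [^]\<^bsub>Q\<^esub> n)" using pij[OF x, of n] fin x by simp
  then have "D x [^]\<^bsub>Q\<^esub> n = \<one>\<^bsub>Q\<^esub>" using x by (simp add: D_def)
  then have "\<pi> (\<delta> x [^] n) = \<one>\<^bsub>Q\<^esub>" using x by (simp add: D_def PI.hom_nat_pow)
  then have "\<delta> x [^] n \<in> N" using ker x by simp
  then show "inv x \<otimes> \<phi> x \<in> N" using tf IH x by (simp add: \<delta>_def)
qed


lemma tf_use:
  fixes n :: nat and K N :: "'a set"
  assumes tf: "torsion_free_group ((G\<lparr>carrier := K\<rparr>) Mod N)"
    and N: "N \<lhd> G" "N \<subseteq> K" and KG: "K \<subseteq> carrier G"
    and y: "y \<in> K" "y [^] n \<in> N" "n > 0"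
  shows "y \<in> N"
proof -
  interpret N: normal N G by fact
  let ?G' = "G\<lparr>carrier := K\<rparr>"
  let ?H = "?G' Mod N"
  have rc: "N #>\<^bsub>?G'\<^esub> a = N #> a" for a by (simp add: r_coset_def)
  have sm: "set_mult ?G' A B = A <#> B" for A B by (simp add: set_mult_def)
  have yG: "y \<in> carrier G" using y KG by blast
  have cH: "N #> y \<in> carrier ?H"
    using y(1) by (auto simp: FactGroup_def RCOSETS_def rc)
  have pw: "(N #> y) [^]\<^bsub>?H\<^esub> m = N #> (y [^] m)" for m :: nat
  proof (induction m)
    case 0 then show ?case using N.subset by (simp add: FactGroup_def)
  next
    case (Suc m)
    have "(N #> y) [^]\<^bsub>?H\<^esub> Suc m = (N #> (y [^] m)) <#> (N #> y)"
      using Suc by (simp add: FactGroup_def sm)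
    also have "\<dots> = N #> (y [^] m \<otimes> y)" using yG by (simp add: N.rcos_sum)
    finally show ?case by simp
  qed
  have "(N #> y) [^]\<^bsub>?H\<^esub> n = \<one>\<^bsub>?H\<^esub>"
    using pw N.rcos_const[OF is_group y(2)] by (simp add: FactGroup_def)
  then have "N #> y = \<one>\<^bsub>?H\<^esub>" using tf cH y(3) unfolding torsion_free_group_def by blast
  then have "N #> y = N" by (simp add: FactGroup_def)
  moreover have "y \<in> N #> y" using rcos_self[OF yG N.subgroup_axioms] .
  ultimately show ?thesis by simp
qed

end



context group begin

lemma pgroup_central:
  fixes p a :: nat and W :: "'a set"
  assumes fin: "finite (carrier G)" and ord: "order G = p ^ a" and p: "Factorial_Ring.prime p"
    and W: "subgroup W G" and Xc: "\<And>g x. g \<in> carrier G \<Longrightarrow> x \<in> W \<Longrightarrow> g \<otimes> x \<otimes> inv g \<in> W"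
    and cX: "card W > 1"
  shows "\<exists>z\<in>W. z \<noteq> \<one> \<and> (\<forall>g\<in>carrier G. g \<otimes> z = z \<otimes> g)"
proof -
  define c where "c = (\<lambda>g. (\<lambda>h \<in> carrier G. g \<otimes> h \<otimes> (inv g)))"
  interpret A: group_action G "carrier G" c unfolding c_def by (rule action_by_conjugation)
  let ?orb = "\<lambda>x. orbit G c x"
  have XG: "W \<subseteq> carrier G" using W subgroup.subset by blast
  have finX: "finite W" using fin XG finite_subset by blast
  have orb_eq: "?orb x = {g \<otimes> x \<otimes> inv g | g. g \<in> carrier G}" if "x \<in> carrier G" for x
    using that by (auto simp: orbit_def c_def)
  have orbX: "?orb x \<subseteq> W" if "x \<in> W" for x
  proof -
    have "x \<in> carrier G" using that XG by blast
    then show ?thesis using that Xc by (auto simp: orb_eq)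
  qed
  have orb_in: "x \<in> ?orb x" if "x \<in> carrier G" for x using A.orbit_refl that .
  have orb_same: "?orb x = ?orb y" if "x \<in> carrier G" "y \<in> carrier G" "y \<in> ?orb x" for x y
  proof
    show "?orb y \<subseteq> ?orb x"
    proof
      fix z assume z: "z \<in> ?orb y"
      have zG: "z \<in> carrier G" using z that(2) by (auto simp: orb_eq)
      show "z \<in> ?orb x" using A.orbit_trans[OF that(1) that(2) zG that(3) z] .
    qed
  next
    have xy: "x \<in> ?orb y" using A.orbit_sym[OF that] .
    show "?orb x \<subseteq> ?orb y"
    proof
      fix z assume z: "z \<in> ?orb x"
      have zG: "z \<in> carrier G" using z that(1) by (auto simp: orb_eq)
      show "z \<in> ?orb y" using A.orbit_trans[OF that(2) that(1) zG xy z] .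
    qed
  qed
  have orb_card: "\<exists>b. card (?orb x) = p ^ b" if "x \<in> carrier G" for x
  proof -
    have "card (?orb x) * card (stabilizer G c x) = p ^ a"
      using A.orbit_stabilizer_theorem[OF that] ord by simp
    then have "card (?orb x) dvd p ^ a" by (metis dvd_triv_left)
    then show ?thesis using divides_primepow_nat[OF p] by blast
  qed
  define Ob where "Ob = ?orb ` W"
  have finO: "finite Ob" using finX by (simp add: Ob_def)
  have finorb: "finite ob" if "ob \<in> Ob" for ob
    using that orbX finX by (auto simp: Ob_def intro: finite_subset)
  have UO: "\<Union>Ob = W"
  proof
    show "\<Union>Ob \<subseteq> W" using orbX by (auto simp: Ob_def)
    show "W \<subseteq> \<Union>Ob" using orb_in XG by (auto simp: Ob_def)
  qed
  have disj: "pairwise disjnt Ob"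
  proof (rule pairwiseI)
    fix o1 o2 assume o1: "o1 \<in> Ob" and o2: "o2 \<in> Ob" and ne: "o1 \<noteq> o2"
    then obtain x y where xy: "x \<in> W" "y \<in> W" "o1 = ?orb x" "o2 = ?orb y" by (auto simp: Ob_def)
    show "disjnt o1 o2"
    proof (rule ccontr)
      assume "\<not> disjnt o1 o2"
      then obtain z where z: "z \<in> ?orb x" "z \<in> ?orb y" using xy by (auto simp: disjnt_def)
      have xG: "x \<in> carrier G" "y \<in> carrier G" using xy XG by auto
      have zG: "z \<in> carrier G" using z xG by (auto simp: orb_eq)
      have "?orb x = ?orb z" using orb_same[OF xG(1) zG z(1)] .
      moreover have "?orb y = ?orb z" using orb_same[OF xG(2) zG z(2)] .
      ultimately show False using ne xy by simp
    qed
  qed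
  have cardX: "card W = (\<Sum>ob\<in>Ob. card ob)"
    using card_Union_disjoint[OF disj finorb] UO by simp
  define Ob1 where "Ob1 = {ob\<in>Ob. card ob = 1}"
  have sum_split: "(\<Sum>ob\<in>Ob. card ob) = (\<Sum>ob\<in>Ob1. card ob) + (\<Sum>ob\<in>Ob - Ob1. card ob)"
    using finO by (metis (no_types, lifting) Ob1_def mem_Collect_eq subsetI sum.subset_diff add.commute)
  have s1: "(\<Sum>ob\<in>Ob1. card ob) = card Ob1" by (simp add: Ob1_def)
  have s2: "p dvd (\<Sum>ob\<in>Ob - Ob1. card ob)"
  proof (rule dvd_sum)
    fix ob assume ob: "ob \<in> Ob - Ob1"
    then obtain x where x: "x \<in> W" "ob = ?orb x" by (auto simp: Ob_def)
    have xG: "x \<in> carrier G" using x XG by auto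
    obtain b where b: "card ob = p ^ b" using orb_card[OF xG] x by auto
    have "b \<noteq> 0" using ob b by (auto simp: Ob1_def)
    then show "p dvd card ob" using b by simp
  qed
  have "card W dvd order G" using lagrange[OF W] by (metis dvd_triv_right)
  then obtain i where i: "card W = p ^ i" using ord divides_primepow_nat[OF p] by auto
  with cX have "i \<noteq> 0" by (cases i) auto
  then have "p dvd card W" using i by simp
  then have pO1: "p dvd card Ob1" using cardX sum_split s1 s2 by (simp add: dvd_add_left_iff)
  have oneO1: "{\<one>} \<in> Ob1"
  proof -
    have "?orb \<one> = {\<one>}" by (auto simp: orb_eq intro!: exI[where x="\<one>"])
    moreover have "\<one> \<in> W" using W subgroup.one_closed by blast
    ultimately show ?thesis by (force simp: Ob1_def Ob_def)
  qed
  have finO1: "finite Ob1" using finO by (simp add: Ob1_def)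
  have "card Ob1 \<noteq> 0" using oneO1 finO1 by auto
  then have "card Ob1 \<ge> p" using pO1 by (simp add: dvd_imp_le)
  moreover have "p \<ge> 2" using p prime_ge_2_nat by blast
  ultimately have "card Ob1 \<ge> 2" by simp
  then have "\<not> Ob1 \<subseteq> {{\<one>}}"
    by (metis card.empty card_insert_disjoint card_mono empty_iff finite.emptyI finite.insertI not_less_eq_eq numeral_2_eq_2 one_le_numeral Suc_1 card_1_singleton_iff order_trans subset_singletonD card.insert)
  then obtain ob where ob: "ob \<in> Ob1" "ob \<noteq> {\<one>}" by blast
  then obtain z where z: "z \<in> W" "ob = ?orb z" "card ob = 1" by (auto simp: Ob1_def Ob_def)
  have zG: "z \<in> carrier G" using z XG by auto
  have "?orb z = {z}" using z orb_in[OF zG] by (metis card_1_singletonE singletonD)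
  then have zc: "g \<otimes> z \<otimes> inv g = z" if "g \<in> carrier G" for g
    using that zG by (auto simp: orb_eq)
  have "z \<noteq> \<one>" using ob z \<open>?orb z = {z}\<close> by auto
  moreover have "g \<otimes> z = z \<otimes> g" if "g \<in> carrier G" for g
  proof -
    have "g \<otimes> z \<otimes> inv g \<otimes> g = z \<otimes> g" using zc that by simp
    then show ?thesis using that zG by (simp add: m_assoc)
  qed
  ultimately show ?thesis using z by blast
qed

end



context tg begin

lemma open_super:
  assumes N: "subgroup N G" "openin T N" and K: "subgroup K G" "N \<subseteq> K"
  shows "openin T K"
proof -
  have "K = (\<Union>k\<in>K. k <# N)"
  proof
    show "K \<subseteq> (\<Union>k\<in>K. k <# N)"
    proof
      fix k assume k: "k \<in> K"
      have kG: "k \<in> carrier G" using k by (rule subgroup.mem_carrier[OF K(1)])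
      have "k = k \<otimes> \<one>" using kG by simp
      then have "k \<in> k <# N" using subgroup.one_closed[OF N(1)] unfolding l_coset_def by blast
      then show "k \<in> (\<Union>k\<in>K. k <# N)" using k by blast
    qed
    show "(\<Union>k\<in>K. k <# N) \<subseteq> K"
    proof
      fix x assume "x \<in> (\<Union>k\<in>K. k <# N)"
      then obtain k n where "k \<in> K" "n \<in> N" "x = k \<otimes> n" unfolding l_coset_def by blast
      then show "x \<in> K" using K(2) subgroup.m_closed[OF K(1)] by blast
    qed
  qed
  moreover have "openin T (\<Union>k\<in>K. k <# N)"
  proof (rule openin_Union, clarify)
    fix k assume "k \<in> K"
    then have "k \<in> carrier G" by (rule subgroup.mem_carrier[OF K(1)])
    then show "openin T (k <# N)" by (rule open_lcoset[OF N(2)])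
  qed
  ultimately show ?thesis by simp
qed

definition commset :: "'a set \<Rightarrow> 'a set" where
  "commset M = {commutator G a b | a b. a \<in> M \<and> b \<in> carrier G}"

end

locale ptg = tg +
  fixes p :: nat
  assumes pprime: "Factorial_Ring.prime p"
    and pidx: "\<And>N. N \<lhd> G \<Longrightarrow> openin T N \<Longrightarrow> \<exists>k. card (rcosets N) = p ^ k"
begin

lemma center_lemma:
  assumes N: "N \<lhd> G" "openin T N" and K: "K \<lhd> G" "N \<subseteq> K" and M: "M \<lhd> G" "K \<subseteq> M"
    and nsub: "\<not> M \<subseteq> K"
  shows "\<exists>z\<in>M. z \<notin> K \<and> (\<forall>g\<in>carrier G. commutator G z g \<in> K)"
proof -
  interpret K: normal K G by fact
  have Kopen: "openin T K"
    using open_super[OF normal_imp_subgroup[OF N(1)] N(2) normal_imp_subgroup[OF K(1)] K(2)] .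
  obtain a where a: "card (rcosets K) = p ^ a" using pidx[OF K(1) Kopen] by blast
  define Q where "Q = G Mod K"
  define \<pi> where "\<pi> = (\<lambda>x. K #> x)"
  have Qg: "group Q" unfolding Q_def by (rule K.factorgroup_is_group)
  interpret Q: group Q by (rule Qg)
  have pih: "\<pi> \<in> hom G Q" unfolding \<pi>_def Q_def by (rule K.r_coset_hom_Mod)
  interpret PI: group_hom G Q \<pi> using pih by (simp add: group_hom_def group_hom_axioms_def is_group Qg)
  have ordQ: "order Q = p ^ a" using a by (simp add: order_def Q_def FactGroup_def)
  have "p ^ a > 0" using pprime prime_gt_0_nat by simp
  then have "card (carrier Q) > 0" using ordQ by (simp add: order_def)
  then have finQ: "finite (carrier Q)" by (rule card_ge_0_finite)
  have Q1: "\<one>\<^bsub>Q\<^esub> = K" by (simp add: Q_def FactGroup_def)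
  have ker: "\<pi> z = \<one>\<^bsub>Q\<^esub> \<longleftrightarrow> z \<in> K" if "z \<in> carrier G" for z
  proof
    assume "\<pi> z = \<one>\<^bsub>Q\<^esub>"
    then have "K #> z = K" by (simp add: \<pi>_def Q1)
    moreover have "z \<in> K #> z" using rcos_self[OF that K.subgroup_axioms] .
    ultimately show "z \<in> K" by simp
  next
    assume "z \<in> K" then show "\<pi> z = \<one>\<^bsub>Q\<^esub>"
      unfolding \<pi>_def Q1 by (rule K.rcos_const[OF is_group])
  qed
  have MG: "M \<subseteq> carrier G" using subgroup.subset[OF normal_imp_subgroup[OF M(1)]] .
  define W where "W = \<pi> ` M"
  have Wsub: "subgroup W Q" unfolding W_def
    by (rule PI.subgroup_img_is_subgroup[OF normal_imp_subgroup[OF M(1)]])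
  have Wc: "q \<otimes>\<^bsub>Q\<^esub> w \<otimes>\<^bsub>Q\<^esub> inv\<^bsub>Q\<^esub> q \<in> W" if qQ: "q \<in> carrier Q" and wW: "w \<in> W" for q w
  proof -
    have "q \<in> rcosets K" using qQ by (simp add: Q_def FactGroup_def)
    then obtain g where g: "g \<in> carrier G" "q = \<pi> g"
      unfolding RCOSETS_def \<pi>_def by blast
    obtain m where m: "m \<in> M" "w = \<pi> m" using wW by (auto simp: W_def)
    have mG: "m \<in> carrier G" using m MG by blast
    have "q \<otimes>\<^bsub>Q\<^esub> w \<otimes>\<^bsub>Q\<^esub> inv\<^bsub>Q\<^esub> q = \<pi> (g \<otimes> m \<otimes> inv g)"
      using g m mG by simp
    moreover have "g \<otimes> m \<otimes> inv g \<in> M" using M(1) g m by (simp add: normal_inv_iff)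
    ultimately show ?thesis by (simp add: W_def)
  qed
  obtain m0 where m0: "m0 \<in> M" "m0 \<notin> K" using nsub by blast
  have m0G: "m0 \<in> carrier G" using m0 MG by blast
  have "\<pi> m0 \<noteq> \<pi> \<one>" using ker[OF m0G] m0 by simp
  moreover have "\<pi> m0 \<in> W" unfolding W_def using m0(1) by (rule imageI)
  moreover have "\<pi> \<one> \<in> W" unfolding W_def
    using subgroup.one_closed[OF normal_imp_subgroup[OF M(1)]] by (rule imageI)
  moreover have "finite W" using subgroup.subset[OF Wsub] finQ by (rule finite_subset)
  ultimately have cW: "card W > 1"
  proof -
    assume a1: "\<pi> m0 \<noteq> \<pi> \<one>" and a2: "\<pi> m0 \<in> W" and a3: "\<pi> \<one> \<in> W" and f: "finite W"
    have "{\<pi> m0, \<pi> \<one>} \<subseteq> W" using a2 a3 by blast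
    then have "card {\<pi> m0, \<pi> \<one>} \<le> card W" using f by (rule card_mono[rotated])
    moreover have "card {\<pi> m0, \<pi> \<one>} = 2" using a1 by simp
    ultimately show ?thesis by simp
  qed
  obtain z' where z': "z' \<in> W" "z' \<noteq> \<one>\<^bsub>Q\<^esub>" "\<forall>g\<in>carrier Q. g \<otimes>\<^bsub>Q\<^esub> z' = z' \<otimes>\<^bsub>Q\<^esub> g"
    using Q.pgroup_central[OF finQ ordQ pprime Wsub Wc cW] by blast
  obtain z where z: "z \<in> M" "z' = \<pi> z" using z'(1) by (auto simp: W_def)
  have zG: "z \<in> carrier G" using z MG by blast
  have "z \<notin> K" using ker[OF zG] z z' by simp
  moreover have "commutator G z g \<in> K" if g: "g \<in> carrier G" for g
  proof -
    have "\<pi> g \<otimes>\<^bsub>Q\<^esub> \<pi> z = \<pi> z \<otimes>\<^bsub>Q\<^esub> \<pi> g" using z'(3) z g by simp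
    then have "commutator Q (\<pi> z) (\<pi> g) = \<one>\<^bsub>Q\<^esub>"
      using zG g by (intro Q.commute_imp_comm_one) auto
    then have "\<pi> (commutator G z g) = \<one>\<^bsub>Q\<^esub>" using zG g by (simp add: commutator_def)
    then show ?thesis using ker zG g by simp
  qed
  ultimately show ?thesis using z by blast
qed


lemma finite_rcosets_open:
  assumes "N \<lhd> G" "openin T N"
  shows "finite (rcosets N)"
proof -
  obtain k where "card (rcosets N) = p ^ k" using pidx assms by blast
  moreover have "p ^ k > 0" using pprime prime_gt_0_nat by simp
  ultimately show ?thesis using card_ge_0_finite by metis
qed

definition cnt :: "'a set \<Rightarrow> 'a set \<Rightarrow> nat" where
  "cnt N A = card ((\<lambda>x. N #> x) ` A)"

lemma cnt_mono:
  assumes "N \<lhd> G" "openin T N" "A \<subseteq> B" "B \<subseteq> carrier G"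
  shows "cnt N A \<le> cnt N B"
proof -
  have "(\<lambda>x. N #> x) ` B \<subseteq> rcosets N" using assms(4) unfolding RCOSETS_def by blast
  then have "finite ((\<lambda>x. N #> x) ` B)" using finite_rcosets_open[OF assms(1,2)] finite_subset by blast
  then show ?thesis unfolding cnt_def using assms(3) by (intro card_mono) auto
qed

lemma cnt_strict:
  assumes N: "N \<lhd> G" "openin T N" and A: "subgroup A G" "N \<subseteq> A" and AB: "A \<subseteq> B" "B \<subseteq> carrier G"
    and z: "z \<in> B" "z \<notin> A"
  shows "cnt N A < cnt N B"
proof -
  interpret N: normal N G by fact
  have "(\<lambda>x. N #> x) ` B \<subseteq> rcosets N" using AB(2) unfolding RCOSETS_def by blast
  then have fin: "finite ((\<lambda>x. N #> x) ` B)" using finite_rcosets_open[OF N] finite_subset by blast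
  have zG: "z \<in> carrier G" using z AB by blast
  have "N #> z \<notin> (\<lambda>x. N #> x) ` A"
  proof
    assume "N #> z \<in> (\<lambda>x. N #> x) ` A"
    then obtain a where a: "a \<in> A" "N #> z = N #> a" by blast
    have "z \<in> N #> a" using a(2) rcos_self[OF zG N.subgroup_axioms] by simp
    then obtain n where "n \<in> N" "z = n \<otimes> a" unfolding r_coset_def by blast
    then have "z \<in> A" using a(1) A subgroup.m_closed[OF A(1)] by blast
    then show False using z by simp
  qed
  then have "(\<lambda>x. N #> x) ` A \<subset> (\<lambda>x. N #> x) ` B" using AB z by blast
  then show ?thesis unfolding cnt_def using fin by (rule psubset_card_mono[rotated])
qed

lemma commset_conj: "commset M = {commutator G a b | a b. a \<in> M \<and> b \<in> carrier G}"
  by (simp add: commset_def)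

lemma Zsub:
  assumes K: "K \<lhd> G"
  shows "subgroup {m \<in> carrier G. \<forall>g\<in>carrier G. commutator G m g \<in> K} G"
proof -
  interpret K: normal K G by fact
  show ?thesis
  proof (rule subgroupI)
    show "{m \<in> carrier G. \<forall>g\<in>carrier G. commutator G m g \<in> K} \<subseteq> carrier G" by blast
  next
    show "{m \<in> carrier G. \<forall>g\<in>carrier G. commutator G m g \<in> K} \<noteq> {}"
    proof -
      have "commutator G \<one> g \<in> K" if "g \<in> carrier G" for g
        using that K.one_closed by (simp add: commutator_def)
      then show ?thesis by blast
    qed
  next
    fix a assume a: "a \<in> {m \<in> carrier G. \<forall>g\<in>carrier G. commutator G m g \<in> K}"
    have aG: "a \<in> carrier G" using a by blast
    have "commutator G (inv a) g \<in> K" if g: "g \<in> carrier G" for g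
    proof -
      have c: "commutator G a g \<in> K" using a g by blast
      have "commutator G (inv a) g = a \<otimes> inv (commutator G a g) \<otimes> inv a"
        using aG g by (simp add: commutator_def m_assoc inv_mult_group)
      moreover have "a \<otimes> inv (commutator G a g) \<otimes> inv a \<in> K"
        using K.inv_op_closed2[OF aG K.m_inv_closed[OF c]] .
      ultimately show ?thesis by simp
    qed
    then show "inv a \<in> {m \<in> carrier G. \<forall>g\<in>carrier G. commutator G m g \<in> K}" using aG by simp
  next
    fix a b assume a: "a \<in> {m \<in> carrier G. \<forall>g\<in>carrier G. commutator G m g \<in> K}"
      and b: "b \<in> {m \<in> carrier G. \<forall>g\<in>carrier G. commutator G m g \<in> K}"
    have aG: "a \<in> carrier G" and bG: "b \<in> carrier G" using a b by auto
    have "commutator G (a \<otimes> b) g \<in> K" if g: "g \<in> carrier G" for g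
    proof -
      have ca: "commutator G a g \<in> K" and cb: "commutator G b g \<in> K" using a b g by auto
      have caG: "commutator G a g \<in> carrier G" using aG g by simp
      have "commutator G (a \<otimes> b) g = inv b \<otimes> commutator G a g \<otimes> b \<otimes> commutator G b g"
        using aG bG g by (simp add: commutator_def m_assoc inv_mult_group)
      moreover have "inv b \<otimes> commutator G a g \<otimes> b \<in> K" using K.inv_op_closed1[OF bG ca] .
      ultimately show ?thesis using cb K.m_closed by simp
    qed
    then show "a \<otimes> b \<in> {m \<in> carrier G. \<forall>g\<in>carrier G. commutator G m g \<in> K}" using aG bG by simp
  qed
qed

lemma p_lemma:
  assumes N: "N \<lhd> G" "openin T N"
  shows "K \<lhd> G \<Longrightarrow> N \<subseteq> K \<Longrightarrow> M \<lhd> G \<Longrightarrow> K \<subseteq> M \<Longrightarrow> M \<subseteq> generate G (commset M \<union> K) \<Longrightarrow> M \<subseteq> K"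
proof (induction "cnt N M - cnt N K" arbitrary: K rule: less_induct)
  case less
  note K = less.prems(1,2) and M = less.prems(3,4) and gen = less.prems(5)
  interpret K: normal K G by (rule K(1))
  interpret M: normal M G by (rule M(1))
  show "M \<subseteq> K"
  proof (rule ccontr)
    assume nsub: "\<not> M \<subseteq> K"
    obtain z where z: "z \<in> M" "z \<notin> K" "\<forall>g\<in>carrier G. commutator G z g \<in> K"
      using center_lemma[OF N K M nsub] by blast
    have zG: "z \<in> carrier G" using z(1) M.subset by blast
    define S where "S = K \<union> (z <# K)"
    define K' where "K' = generate G S"
    have SG: "S \<subseteq> carrier G" unfolding S_def using K.subset zG
      by (auto simp: l_coset_def)
    have conjS: "g \<otimes> h \<otimes> inv g \<in> S" if h: "h \<in> S" and g: "g \<in> carrier G" for h g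
    proof (cases "h \<in> K")
      case True then show ?thesis using K.inv_op_closed2[OF g] by (simp add: S_def)
    next
      case False
      then obtain k where k: "k \<in> K" "h = z \<otimes> k" using h by (auto simp: S_def l_coset_def)
      have kG: "k \<in> carrier G" using k K.subset by blast
      have "g \<otimes> h \<otimes> inv g = z \<otimes> (commutator G z (inv g) \<otimes> (g \<otimes> k \<otimes> inv g))"
        using zG kG g k(2) by (simp add: commutator_def m_assoc)
      moreover have "commutator G z (inv g) \<otimes> (g \<otimes> k \<otimes> inv g) \<in> K"
        using z(3) g K.inv_op_closed2[OF g k(1)] K.m_closed by simp
      ultimately show ?thesis by (auto simp: S_def l_coset_def)
    qed
    have K'n: "K' \<lhd> G" unfolding K'_def by (rule normal_generateI[OF SG conjS])
    have SM: "S \<subseteq> M" unfolding S_def using M(2) z(1) M.m_closed by (auto simp: l_coset_def)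
    have K'M: "K' \<subseteq> M" unfolding K'_def by (rule generate_subgroup_incl[OF SM M.subgroup_axioms])
    have KK': "K \<subseteq> K'" unfolding K'_def S_def by (meson Un_subset_iff generate.incl subsetI)
    have zK': "z \<in> K'"
    proof -
      have "z = z \<otimes> \<one>" using zG by simp
      then have "z \<in> z <# K" using K.one_closed unfolding l_coset_def by blast
      then show ?thesis unfolding K'_def S_def by (blast intro: generate.incl)
    qed
    have genK': "M \<subseteq> generate G (commset M \<union> K')"
      using gen mono_generate[of "commset M \<union> K" "commset M \<union> K'"] KK' by blast
    have c1: "cnt N K < cnt N K'"
      by (rule cnt_strict[OF N K.subgroup_axioms K(2) KK' _ zK' z(2)])
         (use K'n normal_imp_subgroup subgroup.subset in blast)
    have c2: "cnt N K' \<le> cnt N M" by (rule cnt_mono[OF N K'M M.subset])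
    have "M \<subseteq> K'"
      by (rule less.hyps[OF _ K'n _ M(1) K'M genK']) (use c1 c2 K(2) KK' in auto)
    define Z where "Z = {m \<in> carrier G. \<forall>g\<in>carrier G. commutator G m g \<in> K}"
    have Zs: "subgroup Z G" unfolding Z_def by (rule Zsub[OF K(1)])
    have SZ: "S \<subseteq> Z"
    proof
      fix h assume h: "h \<in> S"
      then have hG: "h \<in> carrier G" using SG by blast
      show "h \<in> Z"
      proof (cases "h \<in> K")
        case True then show ?thesis using comm_in_normal[OF K(1)] hG by (simp add: Z_def)
      next
        case False
        then obtain k where k: "k \<in> K" "h = z \<otimes> k" using h by (auto simp: S_def l_coset_def)
        have "z \<in> Z" using z(3) zG by (simp add: Z_def)
        moreover have "k \<in> Z" using comm_in_normal[OF K(1) k(1)] k(1) K.subset by (auto simp: Z_def)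
        ultimately show ?thesis using k(2) subgroup.m_closed[OF Zs] by simp
      qed
    qed
    have "K' \<subseteq> Z" unfolding K'_def by (rule generate_subgroup_incl[OF SZ Zs])
    then have "commset M \<subseteq> K" using \<open>M \<subseteq> K'\<close> by (auto simp: commset_def Z_def)
    then have "commset M \<union> K \<subseteq> K" by blast
    then have "generate G (commset M \<union> K) \<subseteq> K" by (rule generate_subgroup_incl[OF _ K.subgroup_axioms])
    then show False using gen nsub by blast
  qed
qed


lemma LC_in_open_aux:
  assumes N: "N \<lhd> G" "openin T N"
  shows "M \<lhd> G \<Longrightarrow> N \<subseteq> M \<Longrightarrow> LC (Suc j) \<subseteq> M \<Longrightarrow> \<exists>m. LC m \<subseteq> N"
proof (induction "cnt N M" arbitrary: M j rule: less_induct)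
  case less
  note M = less.prems(1,2) and LM = less.prems(3)
  interpret M: normal M G by (rule M(1))
  interpret N: normal N G by (rule N(1))
  show ?case
  proof (cases "M \<subseteq> N")
    case True then show ?thesis using LM by blast
  next
    case False
    define F where "F = generate G (commset M \<union> N)"
    have SG: "commset M \<union> N \<subseteq> carrier G" using M.subset N.subset by (auto simp: commset_def)
    have conj: "g \<otimes> h \<otimes> inv g \<in> commset M \<union> N" if h: "h \<in> commset M \<union> N" and g: "g \<in> carrier G" for h g
    proof (cases "h \<in> N")
      case True then show ?thesis using N.inv_op_closed2[OF g] by simp
    next
      case False
      then have "h \<in> commset M" using h by simp
      then show ?thesis using comm_set_conj_closed[OF M(1) _ g] unfolding commset_def by blast
    qed
    have Fn: "F \<lhd> G" unfolding F_def by (rule normal_generateI[OF SG conj])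
    have Fs: "subgroup F G" using Fn by (rule normal_imp_subgroup)
    have "commset M \<union> N \<subseteq> M" using comm_in_normal[OF M(1)] M(2) by (auto simp: commset_def)
    then have FM: "F \<subseteq> M" unfolding F_def by (rule generate_subgroup_incl[OF _ M.subgroup_axioms])
    have NF: "N \<subseteq> F" unfolding F_def by (meson Un_subset_iff generate.incl subsetI)
    have "F \<noteq> M"
    proof
      assume "F = M"
      then have "M \<subseteq> generate G (commset M \<union> N)" by (simp add: F_def)
      then have "M \<subseteq> N" using p_lemma[OF N N(1) order.refl M(1) M(2)] by blast
      then show False using False by simp
    qed
    then obtain z where z: "z \<in> M" "z \<notin> F" using FM by blast
    have lt: "cnt N F < cnt N M" by (rule cnt_strict[OF N Fs NF FM M.subset z])
    have "LC (Suc (Suc j)) \<subseteq> F"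
    proof -
      let ?S = "{commutator G a b | a b. a \<in> LC (Suc j) \<and> b \<in> carrier G}"
      have "?S \<subseteq> commset M" using LM by (auto simp: commset_def)
      then have "?S \<subseteq> F" unfolding F_def by (meson Un_subset_iff generate.incl subset_trans subsetI)
      then have "generate G ?S \<subseteq> F" by (rule generate_subgroup_incl[OF _ Fs])
      then have "T closure_of generate G ?S \<subseteq> F"
        by (rule closure_sub_open_subgroup[OF N.subgroup_axioms N(2) Fs NF])
      then show ?thesis using LC_SS by simp
    qed
    then show ?thesis using less.hyps[OF lt Fn NF] by blast
  qed
qed

lemma LC_in_open:
  assumes N: "N \<lhd> G" "openin T N"
  shows "\<exists>m. LC m \<subseteq> N"
proof -
  interpret N: normal N G by (rule N(1))
  show ?thesis
    using LC_in_open_aux[OF N normal_carrier N.subset, of 0] by simp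
qed

end



context tg begin

lemma contZ_mult:
  assumes "continuous_map Z T f" "continuous_map Z T g"
  shows "continuous_map Z T (\<lambda>x. f x \<otimes> g x)"
proof -
  have "continuous_map Z (prod_topology T T) (\<lambda>x. (f x, g x))"
    using assms by (simp add: continuous_map_paired)
  from continuous_map_compose[OF this cont_mult] show ?thesis by (simp add: o_def)
qed

lemma contZ_inv:
  assumes "continuous_map Z T f"
  shows "continuous_map Z T (\<lambda>x. inv (f x))"
  using continuous_map_compose[OF assms cont_inv] by (simp add: o_def)

lemma separate_open_normal:
  assumes cpt: "compact_space T" and hd: "Hausdorff_space T" and td: "totally_disconnected_space T"
    and x: "x \<in> carrier G" "x \<noteq> \<one>"
  shows "\<exists>N. N \<lhd> G \<and> openin T N \<and> x \<notin> N"
proof -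
  have cc: "connected_component_of_set T \<one> = {\<one>}"
  proof
    show "connected_component_of_set T \<one> \<subseteq> {\<one>}"
      using td unfolding totally_disconnected_space_def by auto
    show "{\<one>} \<subseteq> connected_component_of_set T \<one>"
      by (simp add: connected_component_of_refl)
  qed
  have C: "{\<one>} \<in> connected_components_of T"
    unfolding connected_components_of_def using cc by (metis image_eqI one_closed top)
  have t1: "t1_space T" using hd by (rule Hausdorff_imp_t1_space)
  have "closedin T {x}" using t1 x(1) by (simp add: t1_space_closedin_singleton)
  then have Wo: "openin T (topspace T - {x})" by (rule openin_diff[OF openin_topspace])
  obtain U V where UV: "openin T U" "openin T V" "disjnt U V" "U \<union> V = topspace T"
      "{\<one>} \<subseteq> U" "U \<subseteq> topspace T - {x}"
    using wilder_locally_compact_component_thm[OF compact_imp_locally_compact_space[OF cpt] hd C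
        _ Wo] x by auto
  have UG: "U \<subseteq> carrier G" using UV by auto
  have "U = topspace T - V" using UV(3,4) by (auto simp: disjnt_def)
  then have "closedin T U" using UV(2) by auto
  then have Uc: "compactin T U" using closedin_compact_space[OF cpt] by blast
  define Wm where "Wm = {z \<in> topspace (prod_topology T T). (\<lambda>(a, b). a \<otimes> b) z \<in> U}"
  have Wmo: "openin (prod_topology T T) Wm"
    unfolding Wm_def by (rule openin_continuous_map_preimage[OF cont_mult UV(1)])
  have "U \<times> {\<one>} \<subseteq> Wm" using UG by (auto simp: Wm_def)
  then obtain U1 V1 where V1: "openin T U1" "openin T V1" "U \<subseteq> U1" "\<one> \<in> V1" "U1 \<times> V1 \<subseteq> Wm"
    using tube_lemma_left[OF Wmo Uc, of "\<one>"] by auto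
  have UV1: "u \<otimes> v \<in> U" if "u \<in> U" "v \<in> V1" for u v
  proof -
    have "(u, v) \<in> U1 \<times> V1" using V1(3) that by blast
    then have "(u, v) \<in> Wm" using V1(5) by blast
    then show ?thesis by (simp add: Wm_def)
  qed
  define S0 where "S0 = {v \<in> topspace T. v \<in> V1 \<and> inv v \<in> V1}"
  have S0o: "openin T S0"
  proof -
    have "openin T {v \<in> topspace T. inv v \<in> V1}"
      by (rule openin_continuous_map_preimage[OF cont_inv V1(2)])
    then have "openin T (V1 \<inter> {v \<in> topspace T. inv v \<in> V1})" using V1(2) by auto
    moreover have "V1 \<inter> {v \<in> topspace T. inv v \<in> V1} = S0" unfolding S0_def by auto
    ultimately show ?thesis by simp
  qed
  have ccont: "continuous_map (prod_topology T T) T (\<lambda>z. fst z \<otimes> snd z \<otimes> inv (fst z))"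
    by (intro contZ_mult contZ_inv continuous_map_fst continuous_map_snd)
  define Wc where "Wc = {z \<in> topspace (prod_topology T T). fst z \<otimes> snd z \<otimes> inv (fst z) \<in> S0}"
  have Wco: "openin (prod_topology T T) Wc"
    unfolding Wc_def by (rule openin_continuous_map_preimage[OF ccont S0o])
  have "topspace T \<times> {\<one>} \<subseteq> Wc" using V1(4) by (auto simp: Wc_def S0_def)
  then obtain U2 V2 where V2: "openin T U2" "openin T V2" "topspace T \<subseteq> U2" "\<one> \<in> V2" "U2 \<times> V2 \<subseteq> Wc"
    using tube_lemma_left[OF Wco cpt[unfolded compact_space_def], of "\<one>"] by auto
  have V2G: "V2 \<subseteq> carrier G" using openin_subset[OF V2(2)] by simp
  have conjS0: "g \<otimes> v \<otimes> inv g \<in> S0" if "g \<in> carrier G" "v \<in> V2" for g v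
  proof -
    have "(g, v) \<in> U2 \<times> V2" using V2(3) that by auto
    then have "(g, v) \<in> Wc" using V2(5) by blast
    then show ?thesis by (simp add: Wc_def)
  qed
  define S where "S = {g \<otimes> v \<otimes> inv g | g v. g \<in> carrier G \<and> v \<in> V2}"
  have SS0: "S \<subseteq> S0" using conjS0 by (auto simp: S_def)
  have SG: "S \<subseteq> carrier G" using V2G by (auto simp: S_def)
  have Sconj: "h \<otimes> s \<otimes> inv h \<in> S" if sS: "s \<in> S" and hG: "h \<in> carrier G" for s h
  proof -
    obtain g v where gv: "s = g \<otimes> v \<otimes> inv g" "g \<in> carrier G" "v \<in> V2" using sS unfolding S_def by blast
    have vG: "v \<in> carrier G" using gv V2G by blast
    have "h \<otimes> s \<otimes> inv h = (h \<otimes> g) \<otimes> v \<otimes> inv (h \<otimes> g)"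
      using gv vG hG by (simp add: m_assoc inv_mult_group)
    moreover have "h \<otimes> g \<in> carrier G" using gv hG by simp
    ultimately show ?thesis using gv unfolding S_def by blast
  qed
  define H where "H = generate G S"
  have Hn: "H \<lhd> G" unfolding H_def by (rule normal_generateI[OF SG Sconj])
  have Hs: "subgroup H G" using Hn by (rule normal_imp_subgroup)
  have HU: "\<forall>u\<in>U. u \<otimes> h \<in> U" if "h \<in> H" for h
    using that unfolding H_def
  proof (induction rule: generate.induct)
    case one then show ?case using UG by auto
  next
    case (incl h) then show ?case using SS0 UV1 by (auto simp: S0_def)
  next
    case (inv h) then show ?case using SS0 UV1 by (auto simp: S0_def)
  next
    case (eng h1 h2)
    have "h1 \<in> carrier G" "h2 \<in> carrier G"
      using eng.hyps generate_incl[OF SG] by auto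
    then show ?case using eng.IH UG by (auto simp: m_assoc[symmetric])
  qed
  have "H \<subseteq> U"
  proof
    fix h assume h: "h \<in> H"
    have hG: "h \<in> carrier G" using h subgroup.subset[OF Hs] by blast
    have "\<one> \<in> U" using UV(5) by simp
    then show "h \<in> U" using HU[OF h] hG by force
  qed
  then have "x \<notin> H" using UV(6) by blast
  moreover have "openin T H"
  proof -
    have V2H: "V2 \<subseteq> H"
    proof
      fix v assume v: "v \<in> V2"
      have vG: "v \<in> carrier G" using v V2G by blast
      have "v = \<one> \<otimes> v \<otimes> inv \<one>" using vG by simp
      then have "v \<in> S" unfolding S_def using v one_closed by blast
      then show "v \<in> H" unfolding H_def by (rule generate.incl)
    qed
    have "H = (\<Union>h\<in>H. h <# V2)"
    proof
      show "H \<subseteq> (\<Union>h\<in>H. h <# V2)"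
      proof
        fix h assume h: "h \<in> H"
        have hG: "h \<in> carrier G" using h subgroup.subset[OF Hs] by blast
        have "h = h \<otimes> \<one>" using hG by simp
        then have "h \<in> h <# V2" using V2(4) unfolding l_coset_def by blast
        then show "h \<in> (\<Union>h\<in>H. h <# V2)" using h by blast
      qed
      show "(\<Union>h\<in>H. h <# V2) \<subseteq> H"
      proof
        fix y assume "y \<in> (\<Union>h\<in>H. h <# V2)"
        then obtain h v where "h \<in> H" "v \<in> V2" "y = h \<otimes> v" unfolding l_coset_def by blast
        then show "y \<in> H" using V2H subgroup.m_closed[OF Hs] by blast
      qed
    qed
    moreover have "openin T (\<Union>h\<in>H. h <# V2)"
    proof (rule openin_Union, clarify)
      fix h assume "h \<in> H"
      then have "h \<in> carrier G" using subgroup.subset[OF Hs] by blast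
      then show "openin T (h <# V2)" by (rule open_lcoset[OF V2(2)])
    qed
    ultimately show ?thesis by simp
  qed
  ultimately show ?thesis using Hn by blast
qed

end



theorem lemma6p1:
  fixes p :: nat and G :: "('a, 'b) monoid_scheme" and T :: "'a topology"
    and \<phi> :: "'a \<Rightarrow> 'a"
  assumes "pro_p_group p G T"
    and "\<forall>i\<ge>1. torsion_free_group
               ((G\<lparr>carrier := lower_central G T i\<rparr>) Mod (lower_central G T (Suc i)))"
    and "\<phi> \<in> iso G G" and "continuous_map T T \<phi>"
    and "\<exists>n>0. \<forall>x \<in> carrier G. (\<phi> ^^ n) x = x"
    and "\<forall>x \<in> carrier G. mult G (m_inv G x) (\<phi> x) \<in> closed_commutator G T (carrier G) (carrier G)"
  shows "\<forall>x \<in> carrier G. \<phi> x = x"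
proof -
  note pp = assms(1)[unfolded pro_p_group_def profinite_group_def]
  have tgr: "topological_group G T" using pp by blast
  have grp: "group G" using tgr by (simp add: topological_group_def)
  interpret tg G T by (intro tg.intro grp tg_axioms.intro tgr)
  interpret ptg G T p
    by (intro ptg.intro tg_axioms ptg_axioms.intro) (use pp in auto)
  have cpt: "compact_space T" and hd: "Hausdorff_space T" and td: "totally_disconnected_space T"
    using pp by auto
  have phom: "\<phi> \<in> hom G G" using assms(3) by (simp add: iso_def)
  obtain n where n: "n > 0" "\<forall>x \<in> carrier G. (\<phi> ^^ n) x = x" using assms(5) by blast
  have LC2: "LC (Suc (Suc 0)) = closed_commutator G T (carrier G) (carrier G)" by simp
  have LC2': "LC (Suc (Suc 0)) = T closure_of generate G {commutator G a b | a b. a \<in> carrier G \<and> b \<in> carrier G}"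
    using LC_SS[of 0] by simp
  have C2: "\<And>x. x \<in> carrier G \<Longrightarrow> inv\<^bsub>G\<^esub> x \<otimes>\<^bsub>G\<^esub> \<phi> x \<in> LC (Suc (Suc 0))"
    using assms(6) LC2 by simp
  have chain: "x \<in> carrier G \<Longrightarrow> inv\<^bsub>G\<^esub> x \<otimes>\<^bsub>G\<^esub> \<phi> x \<in> LC (Suc (Suc k))" for k x
  proof (induction k arbitrary: x)
    case 0 then show ?case using C2 by simp
  next
    case (Suc k)
    show ?case
    proof (rule main_step[where K = "LC (Suc (Suc k))" and C = "LC (Suc (Suc 0))" and n = n])
      show "LC (Suc (Suc k)) \<lhd> G" by (rule LC_normal)
      show "LC (Suc (Suc (Suc k))) \<lhd> G" by (rule LC_normal)
      show "closedin T (LC (Suc (Suc (Suc k))))" by (rule LC_closed)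
      show "LC (Suc (Suc (Suc k))) \<subseteq> LC (Suc (Suc k))" by (rule LC_mono_Suc)
      show "\<And>u g. u \<in> LC (Suc (Suc k)) \<Longrightarrow> g \<in> carrier G \<Longrightarrow> commutator G u g \<in> LC (Suc (Suc (Suc k)))"
        by (rule LC_comm)
      show "\<phi> \<in> hom G G" by (rule phom)
      show "continuous_map T T \<phi>" by (rule assms(4))
      show "\<forall>x \<in> carrier G. (\<phi> ^^ n) x = x" by (rule n(2))
      show "LC (Suc (Suc 0)) = T closure_of generate G {commutator G a b | a b. a \<in> carrier G \<and> b \<in> carrier G}"
        by (rule LC2')
      show "\<And>x. x \<in> carrier G \<Longrightarrow> inv\<^bsub>G\<^esub> x \<otimes>\<^bsub>G\<^esub> \<phi> x \<in> LC (Suc (Suc 0))" by (rule C2)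
      show "\<And>x. x \<in> carrier G \<Longrightarrow> inv\<^bsub>G\<^esub> x \<otimes>\<^bsub>G\<^esub> \<phi> x \<in> LC (Suc (Suc k))" by (rule Suc.IH)
      show "\<And>y. y \<in> LC (Suc (Suc k)) \<Longrightarrow> y [^]\<^bsub>G\<^esub> n \<in> LC (Suc (Suc (Suc k))) \<Longrightarrow> y \<in> LC (Suc (Suc (Suc k)))"
      proof -
        fix y assume y: "y \<in> LC (Suc (Suc k))" "y [^]\<^bsub>G\<^esub> n \<in> LC (Suc (Suc (Suc k)))"
        have tf: "torsion_free_group ((G\<lparr>carrier := LC (Suc (Suc k))\<rparr>) Mod (LC (Suc (Suc (Suc k)))))"
          using spec[OF assms(2), of "Suc (Suc k)"] by (simp del: lower_central.simps)
        show "y \<in> LC (Suc (Suc (Suc k)))"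
          by (rule tf_use[OF tf LC_normal LC_mono_Suc LC_carrier y n(1)])
      qed
      show "x \<in> carrier G" by (rule Suc.prems)
    qed
  qed
  show ?thesis
  proof
    fix x assume x: "x \<in> carrier G"
    have dG: "inv\<^bsub>G\<^esub> x \<otimes>\<^bsub>G\<^esub> \<phi> x \<in> carrier G" using x phom by (simp add: hom_def Pi_def)
    have all: "inv\<^bsub>G\<^esub> x \<otimes>\<^bsub>G\<^esub> \<phi> x \<in> LC m" for m
    proof -
      have "LC (Suc (Suc m)) \<subseteq> LC m" by (rule LC_mono) simp
      then show ?thesis using chain[OF x, of m] by blast
    qed
    have "inv\<^bsub>G\<^esub> x \<otimes>\<^bsub>G\<^esub> \<phi> x = \<one>\<^bsub>G\<^esub>"
    proof (rule ccontr)
      assume ne: "inv\<^bsub>G\<^esub> x \<otimes>\<^bsub>G\<^esub> \<phi> x \<noteq> \<one>\<^bsub>G\<^esub>"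
      obtain N where N: "N \<lhd> G" "openin T N" "inv\<^bsub>G\<^esub> x \<otimes>\<^bsub>G\<^esub> \<phi> x \<notin> N"
        using separate_open_normal[OF cpt hd td dG ne] by blast
      obtain m where "LC m \<subseteq> N" using LC_in_open[OF N(1,2)] by blast
      then show False using all N(3) by blast
    qed
    moreover have "\<phi> x \<in> carrier G" using x phom by (simp add: hom_def Pi_def)
    ultimately have "\<phi> x = x \<otimes>\<^bsub>G\<^esub> \<one>\<^bsub>G\<^esub>"
      using group.inv_solve_left'[OF grp one_closed x] by blast
    then show "\<phi> x = x" using x by simp
  qed
qed


end
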